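(* Let $X$ be convex and let $f$ be $\alpha$-robustly quasiconvex for some $\alpha>0$, with $X\subset\operatorname{dom}f$. Then the set-valued map $\mathrm{Sol}(\cdot)$ is continuous (both upper and lower semicontinuous) at $0$ if and only if $\mathrm{Sol}(0)$ is a singleton and $X^\infty\cap\mathcal{K}_q(f)=\{0\}$.
   Context: Standing assumptions: $f:\mathbb{R}^n\to\mathbb{R}\cup\{\pm\infty\}$ is proper (never $-\infty$ and finite at some point) and lower semicontinuous; $X\subset\mathbb{R}^n$ is a nonempty closed set with $\operatorname{dom}f\cap X$ unbounded. $f$ is $\alpha$-robustly quasiconvex ($\alpha\ge0$) if $x\mapsto f(x)+\langle u,x\rangle$ is quasiconvex for every $u$ in the open ball $\mathbb{B}_\alpha$ of radius $\alpha$ about $0$ (quasiconvex: $g(\lambda x+(1-\lambda)y)\le\max\{g(x),g(y)\}$ for $x,y\in\operatorname{dom}g$, $\lambda\in[0,1]$). $X^\infty=\{u:\exists t_k\to+\infty,\ \exists x_k\in X,\ x_k/t_k\to u\}$. $f^\infty_q(u)=\sup_{x\in\operatorname{dom}f}\sup_{t>0}\frac{f(x+tu)-f(x)}{t}$, $\mathcal{K}_q(f)=\{d: f^\infty_q(d)\le0\}$. $f_u(x)=f(x)-\langle u,x\rangle$, $\mathrm{Sol}(u)=\{x\in X: f_u(x)\le f_u(y)\ \forall y\in X\}$. $F$ is upper semicontinuous at $\bar u$ if for every open $V\supset F(\bar u)$ there is a neighborhood $U$ of $\bar u$ with $F(u)\subset V$ for $u\in U$; lower semicontinuous at $\bar u$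 if $F(\bar u)\neq\emptyset$ and for every open $V$ meeting $F(\bar u)$ there is a neighborhood $U$ of $\bar u$ with $F(u)\cap V\ne\emptyset$ for $u\in U$. *)

theory Defs
  imports "HOL-Analysis.Analysis"
begin

definition edom :: "('a \<Rightarrow> ereal) \<Rightarrow> 'a set" where
  "edom f = {x. f x < \<infinity>}"

definition proper_fun :: "('a \<Rightarrow> ereal) \<Rightarrow> bool" where
  "proper_fun f \<longleftrightarrow> (\<forall>x. f x \<noteq> -\<infinity>) \<and> (\<exists>x. f x \<noteq> \<infinity>)"

definition lsc_fun :: "('a::topological_space \<Rightarrow> ereal) \<Rightarrow> bool" where
  "lsc_fun f \<longleftrightarrow> (\<forall>x. f x \<le> Liminf (at x) f)"

definition quasiconvex_fun :: "('a::real_vector \<Rightarrow> ereal) \<Rightarrow> bool" where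
  "quasiconvex_fun g \<longleftrightarrow>
     (\<forall>x\<in>edom g. \<forall>y\<in>edom g. \<forall>l::real. 0 \<le> l \<and> l \<le> 1 \<longrightarrow>
        g (l *\<^sub>R x + (1 - l) *\<^sub>R y) \<le> max (g x) (g y))"

definition robustly_quasiconvex :: "real \<Rightarrow> ('a::real_inner \<Rightarrow> ereal) \<Rightarrow> bool" where
  "robustly_quasiconvex \<alpha> f \<longleftrightarrow>
     (\<forall>u. norm u < \<alpha> \<longrightarrow> quasiconvex_fun (\<lambda>x. f x + ereal (inner u x)))"

definition asymptotic_cone :: "'a::real_normed_vector set \<Rightarrow> 'a set" where
  "asymptotic_cone X = {u. \<exists>t::nat \<Rightarrow> real. \<exists>x. filterlim t at_top sequentially \<and>
      (\<forall>k. x k \<in> X) \<and> ((\<lambda>k. (1 / t k) *\<^sub>R x k) \<longlonglongrightarrow> u)}"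

definition q_asymptotic :: "('a::real_vector \<Rightarrow> ereal) \<Rightarrow> 'a \<Rightarrow> ereal" where
  "q_asymptotic f u =
     (SUP x\<in>edom f. SUP t\<in>{t::real. t > 0}. (f (x + t *\<^sub>R u) - f x) / ereal t)"

definition Kq :: "('a::real_vector \<Rightarrow> ereal) \<Rightarrow> 'a set" where
  "Kq f = {d. q_asymptotic f d \<le> 0}"

definition shifted :: "('a::real_inner \<Rightarrow> ereal) \<Rightarrow> 'a \<Rightarrow> 'a \<Rightarrow> ereal" where
  "shifted f u x = f x - ereal (inner u x)"

definition Sol :: "('a::real_inner \<Rightarrow> ereal) \<Rightarrow> 'a set \<Rightarrow> 'a \<Rightarrow> 'a set" where
  "Sol f X u = {x\<in>X. \<forall>y\<in>X. shifted f u x \<le> shifted f u y}"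

definition usc_setvalued_at :: "('a::metric_space \<Rightarrow> 'b::topological_space set) \<Rightarrow> 'a \<Rightarrow> bool" where
  "usc_setvalued_at F ub \<longleftrightarrow>
     (\<forall>V. open V \<and> F ub \<subseteq> V \<longrightarrow> (\<exists>e>0. \<forall>u\<in>ball ub e. F u \<subseteq> V))"

definition lsc_setvalued_at :: "('a::metric_space \<Rightarrow> 'b::topological_space set) \<Rightarrow> 'a \<Rightarrow> bool" where
  "lsc_setvalued_at F ub \<longleftrightarrow> F ub \<noteq> {} \<and>
     (\<forall>V. open V \<and> V \<inter> F ub \<noteq> {} \<longrightarrow> (\<exists>e>0. \<forall>u\<in>ball ub e. F u \<inter> V \<noteq> {}))"

end

theory Submission
  imports Defs
begin
lemma sublevel_closed:
  fixes f :: "'a::real_inner \<Rightarrow> ereal"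
  assumes "lsc_fun f"
  shows "closed {x. f x \<le> ereal (inner u x + c)}"
proof -
  have "open {x. ereal (inner u x + c) < f x}"
    unfolding open_dist
  proof safe
    fix x assume x: "ereal (inner u x + c) < f x"
    obtain b where b1: "ereal (inner u x + c) < ereal b" and b2: "ereal b < f x"
      using ereal_dense2[OF x] by blast
    have "ereal b < Liminf (at x) f" using b2 assms unfolding lsc_fun_def
      using order_less_le_trans by blast
    then have "eventually (\<lambda>y. ereal b < f y) (at x)" by (rule less_LiminfD)
    then obtain d1 where d1: "d1 > 0" "\<And>y. 0 < dist y x \<Longrightarrow> dist y x < d1 \<Longrightarrow> ereal b < f y"
      unfolding eventually_at by auto
    define \<eta> where "\<eta> = b - (inner u x + c)"
    have eta: "\<eta> > 0" using b1 by (simp add: \<eta>_def)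
    define d2 where "d2 = \<eta> / (norm u + 1)"
    have nu: "norm u + 1 > 0" by (simp add: add_nonneg_pos)
    have d2: "d2 > 0" using eta nu by (simp add: d2_def)
    show "\<exists>e>0. \<forall>y. dist y x < e \<longrightarrow> y \<in> {x. ereal (inner u x + c) < f x}"
    proof (intro exI[of _ "min d1 d2"] conjI allI impI)
      show "min d1 d2 > 0" using d1 d2 by simp
      fix y assume dy: "dist y x < min d1 d2"
      show "y \<in> {x. ereal (inner u x + c) < f x}"
      proof (cases "y = x")
        case True then show ?thesis using x by simp
      next
        case False
        have "inner u y - inner u x = inner u (y - x)" by (simp add: inner_diff_right)
        also have "\<dots> \<le> norm u * norm (y - x)" by (rule norm_cauchy_schwarz)
        also have "\<dots> \<le> (norm u + 1) * dist y x" by (simp add: dist_norm mult_right_mono)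
        also have "\<dots> < (norm u + 1) * d2" using dy
          by (intro mult_strict_left_mono) (auto simp: nu)
        also have "\<dots> = \<eta>" unfolding d2_def using nu by simp
        finally have "inner u y + c < b" unfolding \<eta>_def by simp
        moreover have "ereal b < f y" using d1(2)[of y] False dy by simp
        ultimately have "ereal (inner u y + c) < f y" using less_ereal.simps(1) order_less_trans by blast
        then show ?thesis by simp
      qed
    qed
  qed
  moreover have "{x. f x \<le> ereal (inner u x + c)} = - {x. ereal (inner u x + c) < f x}"
    by (auto simp: not_less)
  ultimately show ?thesis by (simp add: closed_Compl)
qed

lemma attains_min:
  fixes f :: "'a::real_inner \<Rightarrow> ereal"
  assumes "lsc_fun f" "closed X" "compact K" "K \<subseteq> X" "K \<noteq> {}"
    and fin: "\<And>x. x \<in> X \<Longrightarrow> f x = ereal (g x)"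
  shows "\<exists>z\<in>K. \<forall>y\<in>K. g z - inner u z \<le> g y - inner u y"
proof -
  define C where "C y = X \<inter> {x. f x \<le> ereal (inner u x + (g y - inner u y))}" for y
  have memC: "x \<in> C y \<longleftrightarrow> x \<in> X \<and> g x - inner u x \<le> g y - inner u y" for x y
    unfolding C_def using fin by auto
  have "K \<inter> (\<Inter>i\<in>K. C i) \<noteq> {}"
  proof (rule compact_imp_fip_image[OF assms(3)])
    show "closed (C i)" for i unfolding C_def
      using assms(2) sublevel_closed[OF assms(1)] by (rule closed_Int)
  next
    fix I' assume I': "finite I'" "I' \<subseteq> K"
    show "K \<inter> (\<Inter>i\<in>I'. C i) \<noteq> {}"
    proof (cases "I' = {}")
      case True then show ?thesis using assms(5) by simp
    next
      case False
      define m where "m = Min ((\<lambda>y. g y - inner u y) ` I')"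
      have "m \<in> (\<lambda>y. g y - inner u y) ` I'" unfolding m_def using I' False by simp
      then obtain y where y: "y \<in> I'" "m = g y - inner u y" by auto
      have "\<forall>z\<in>I'. m \<le> g z - inner u z" unfolding m_def using I' by simp
      then have "y \<in> K \<inter> (\<Inter>i\<in>I'. C i)" using y I' assms(4) memC by auto
      then show ?thesis by blast
    qed
  qed
  then obtain z where "z \<in> K" "\<forall>i\<in>K. z \<in> C i" by blast
  then show ?thesis using memC by blast
qed

lemma recession:
  fixes X :: "'a::real_normed_vector set"
  assumes "closed X" "convex X" "d \<in> asymptotic_cone X" "x \<in> X"
  shows "x + d \<in> X"
proof -
  obtain t xs where t: "filterlim t at_top sequentially" and xs: "\<forall>k. xs k \<in> X"
    and lim: "(\<lambda>k. (1 / t k) *\<^sub>R xs k) \<longlonglongrightarrow> d"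
    using assms(3) unfolding asymptotic_cone_def by blast
  have inv0: "(\<lambda>k. inverse (t k)) \<longlonglongrightarrow> 0" by (rule tendsto_inverse_0_at_top[OF t])
  have ev: "eventually (\<lambda>k. t k \<ge> 1) sequentially"
    using t by (simp add: filterlim_at_top)
  define z where "z k = (1 - inverse (t k)) *\<^sub>R x + (1 / t k) *\<^sub>R xs k" for k
  have "(\<lambda>k. (1 - inverse (t k)) *\<^sub>R x) \<longlonglongrightarrow> (1 - 0) *\<^sub>R x"
    by (intro tendsto_intros inv0)
  then have "z \<longlonglongrightarrow> (1 - 0) *\<^sub>R x + d" unfolding z_def by (rule tendsto_add[OF _ lim])
  then have zl: "z \<longlonglongrightarrow> x + d" by simp
  have "eventually (\<lambda>k. z k \<in> X) sequentially"
    using ev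
  proof eventually_elim
    case (elim k)
    have "inverse (t k) \<ge> 0" "inverse (t k) \<le> 1" using elim by (auto simp: inverse_le_1_iff)
    then show ?case unfolding z_def
      using convexD[OF assms(2) assms(4) xs[rule_format, of k], of "1 - inverse (t k)" "inverse (t k)"]
      by (simp add: divide_inverse)
  qed
  then show ?thesis using Lim_in_closed_set[OF assms(1) _ _ zl] by simp
qed

theorem mainTheorem13:
  fixes f :: "'a::euclidean_space \<Rightarrow> ereal" and X :: "'a set" and \<alpha> :: real
  assumes "proper_fun f" and "lsc_fun f"
    and "closed X" and "X \<noteq> {}" and "\<not> bounded (edom f \<inter> X)"
    and "convex X" and "\<alpha> > 0" and "robustly_quasiconvex \<alpha> f"
    and "X \<subseteq> edom f"
  shows "(usc_setvalued_at (Sol f X) 0 \<and> lsc_setvalued_at (Sol f X) 0) \<longleftrightarrow>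
         ((\<exists>x. Sol f X 0 = {x}) \<and> asymptotic_cone X \<inter> Kq f = {0})"
proof -
  define g where "g x = real_of_ereal (f x)" for x
  have fin: "f x = ereal (g x)" if "x \<in> X" for x
  proof -
    have "f x < \<infinity>" using that assms(9) by (auto simp: edom_def)
    moreover have "f x \<noteq> -\<infinity>" using assms(1) by (simp add: proper_fun_def)
    ultimately show ?thesis unfolding g_def by (cases "f x") auto
  qed
  define h where "h u x = g x - inner u x" for u x
  have Sol_eq: "Sol f X u = {x\<in>X. \<forall>y\<in>X. h u x \<le> h u y}" for u
    by (auto simp: Sol_def shifted_def fin h_def)
  have QC: "h u (l *\<^sub>R x + (1 - l) *\<^sub>R y) \<le> max (h u x) (h u y)"
    if "norm u < \<alpha>" "x \<in> X" "y \<in> X" "0 \<le> l" "l \<le> 1" for u x y l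
  proof -
    have "norm (-u) < \<alpha>" using that by simp
    then have q: "quasiconvex_fun (\<lambda>x. f x + ereal (inner (-u) x))"
      using assms(8) unfolding robustly_quasiconvex_def by blast
    have w: "l *\<^sub>R x + (1 - l) *\<^sub>R y \<in> X" using convexD[OF assms(6) that(2,3), of l "1-l"] that by simp
    have "x \<in> edom (\<lambda>x. f x + ereal (inner (-u) x))" "y \<in> edom (\<lambda>x. f x + ereal (inner (-u) x))"
      using that fin by (auto simp: edom_def)
    from q[unfolded quasiconvex_fun_def, rule_format, OF this conjI[OF that(4,5)]]
    show ?thesis using fin[OF w] fin[OF that(2)] fin[OF that(3)] unfolding h_def
      by (simp add: inner_minus_left max_def split: if_splits)
  qed
  have claimA: "\<exists>e>0. \<forall>u. norm u < e \<longrightarrow> (\<forall>y\<in>X. dist y xb \<ge> r \<longrightarrow> h u xb < h u y)"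
    if xb: "Sol f X 0 = {xb}" and r: "r > 0" for xb r
  proof -
    have xbX: "xb \<in> X" and xbmin: "\<And>y. y \<in> X \<Longrightarrow> g xb \<le> g y"
      using xb by (auto simp: Sol_eq h_def)
    have uniq: "z = xb" if "z \<in> X" "\<And>y. y \<in> X \<Longrightarrow> g z \<le> g y" for z
      using xb that by (auto simp: Sol_eq h_def)
    define S where "S = X \<inter> sphere xb r"
    have B: "\<exists>e>0. \<forall>w\<in>S. \<forall>u. norm u < e \<longrightarrow> h u xb < h u w"
    proof (cases "S = {}")
      case True then show ?thesis by (intro exI[of _ 1]) auto
    next
      case False
      have "compact S" unfolding S_def using assms(3) by (simp add: closed_Int_compact)
      then obtain w0 where w0: "w0 \<in> S" "\<And>y. y \<in> S \<Longrightarrow> g w0 - inner 0 w0 \<le> g y - inner 0 y"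
        using attains_min[OF assms(2) assms(3) _ _ False fin, of 0] S_def by blast
      have "g w0 > g xb"
      proof (rule ccontr)
        assume "\<not> g w0 > g xb"
        then have "w0 = xb" using uniq[of w0] w0(1) xbmin S_def by force
        then show False using w0(1) r by (simp add: S_def)
      qed
      define \<delta> where "\<delta> = g w0 - g xb"
      have d: "\<delta> > 0" using \<open>g w0 > g xb\<close> by (simp add: \<delta>_def)
      show ?thesis
      proof (intro exI[of _ "\<delta> / r"] conjI ballI allI impI)
        show "\<delta> / r > 0" using d r by simp
        fix w and u :: 'a assume w: "w \<in> S" and u: "norm u < \<delta> / r"
        have "inner u (w - xb) \<le> norm u * norm (w - xb)" by (rule norm_cauchy_schwarz)
        also have "norm (w - xb) = r" using w by (simp add: S_def dist_norm norm_minus_commute)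
        also have "norm u * r < \<delta>" using u r by (simp add: field_simps)
        also have "\<delta> \<le> g w - g xb" using w0(2)[OF w] by (simp add: \<delta>_def)
        finally show "h u xb < h u w" by (simp add: h_def inner_diff_right)
      qed
    qed
    then obtain e where e: "e > 0" "\<And>w u. w \<in> S \<Longrightarrow> norm u < e \<Longrightarrow> h u xb < h u w" by blast
    show ?thesis
    proof (intro exI[of _ "min e \<alpha>"] conjI allI impI ballI)
      show "min e \<alpha> > 0" using e assms(7) by simp
      fix u :: 'a and y assume u: "norm u < min e \<alpha>" and y: "y \<in> X" and dy: "dist y xb \<ge> r"
      show "h u xb < h u y"
      proof (rule ccontr)
        assume "\<not> h u xb < h u y"
        then have le: "h u y \<le> h u xb" by simp
        define s where "s = dist y xb"
        have s: "s \<ge> r" "s > 0" using dy r by (auto simp: s_def)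
        define l where "l = r / s"
        have l: "0 \<le> l" "l \<le> 1" using s r by (auto simp: l_def)
        define w where "w = l *\<^sub>R y + (1 - l) *\<^sub>R xb"
        have wX: "w \<in> X" using convexD[OF assms(6) y xbX, of l "1-l"] l by (simp add: w_def)
        have "w - xb = l *\<^sub>R (y - xb)" by (simp add: w_def algebra_simps)
        then have "dist w xb = l * s" using l by (simp add: dist_norm s_def)
        also have "\<dots> = r" using s by (simp add: l_def)
        finally have "w \<in> S" using wX by (simp add: S_def dist_commute)
        have "h u w \<le> max (h u y) (h u xb)" unfolding w_def using QC[OF _ y xbX l] u by simp
        also have "\<dots> = h u xb" using le by simp
        finally show False using e(2)[OF \<open>w \<in> S\<close>, of u] u by simp
      qed
    qed
  qed

  have KQ: "asymptotic_cone X \<inter> Kq f = {0}" if xb: "Sol f X 0 = {xb}" for xb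
  proof
    have xbX: "xb \<in> X" and xbmin: "\<And>y. y \<in> X \<Longrightarrow> g xb \<le> g y"
      using xb by (auto simp: Sol_eq h_def)
    have uniq: "z = xb" if "z \<in> X" "\<And>y. y \<in> X \<Longrightarrow> g z \<le> g y" for z
      using xb that by (auto simp: Sol_eq h_def)
    show "asymptotic_cone X \<inter> Kq f \<subseteq> {0}"
    proof
      fix d assume d: "d \<in> asymptotic_cone X \<inter> Kq f"
      have dX: "xb + d \<in> X" using recession[OF assms(3) assms(6) _ xbX] d by blast
      have "(f (xb + 1 *\<^sub>R d) - f xb) / ereal 1 \<le> q_asymptotic f d"
        unfolding q_asymptotic_def
        by (rule SUP_upper2[of xb], use xbX assms(9) in blast) (rule SUP_upper, simp)
      also have "\<dots> \<le> 0" using d by (simp add: Kq_def)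
      finally have "g (xb + d) \<le> g xb" using fin[OF dX] fin[OF xbX] by simp
      then have "xb + d = xb" using uniq[OF dX] xbmin by (meson order_trans)
      then show "d \<in> {0}" by simp
    qed
    show "{0} \<subseteq> asymptotic_cone X \<inter> Kq f"
    proof safe
      have "(\<lambda>k. (1 / real k) *\<^sub>R xb) \<longlonglongrightarrow> 0 *\<^sub>R xb"
        by (intro tendsto_scaleR lim_1_over_n tendsto_const)
      then show "0 \<in> asymptotic_cone X" unfolding asymptotic_cone_def
        using filterlim_real_sequentially xbX
        by (intro CollectI exI[of _ real] exI[of _ "\<lambda>k. xb"]) auto
      have "q_asymptotic f 0 \<le> 0" unfolding q_asymptotic_def
      proof (intro SUP_least)
        fix x t assume x: "x \<in> edom f" and t: "t \<in> {t::real. t > 0}"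
        have "f x < \<infinity>" "f x \<noteq> -\<infinity>" using x assms(1) by (auto simp: edom_def proper_fun_def)
        then show "(f (x + t *\<^sub>R 0) - f x) / ereal t \<le> 0" by (cases "f x") auto
      qed
      then show "0 \<in> Kq f" by (simp add: Kq_def)
    qed
  qed
  show ?thesis
  proof
    assume A: "usc_setvalued_at (Sol f X) 0 \<and> lsc_setvalued_at (Sol f X) 0"
    then obtain xb where xb0: "xb \<in> Sol f X 0" unfolding lsc_setvalued_at_def by blast
    have xbX: "xb \<in> X" and xbmin: "\<And>y. y \<in> X \<Longrightarrow> g xb \<le> g y"
      using xb0 by (auto simp: Sol_eq h_def)
    have "Sol f X 0 = {xb}"
    proof (rule ccontr)
      assume "Sol f X 0 \<noteq> {xb}"
      then obtain y where y0: "y \<in> Sol f X 0" "y \<noteq> xb" using xb0 by blast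
      have yX: "y \<in> X" and ymin: "\<And>z. z \<in> X \<Longrightarrow> g y \<le> g z"
        using y0 by (auto simp: Sol_eq h_def)
      define r where "r = dist y xb / 2"
      have r: "r > 0" using y0 by (simp add: r_def)
      have Vb: "open (ball xb r) \<and> ball xb r \<inter> Sol f X 0 \<noteq> {}" proof -
        have "xb \<in> ball xb r \<inter> Sol f X 0" using xb0 r by simp
        then show ?thesis by blast
      qed
      have L: "\<forall>V. open V \<and> V \<inter> Sol f X 0 \<noteq> {} \<longrightarrow> (\<exists>e>0. \<forall>u\<in>ball 0 e. Sol f X u \<inter> V \<noteq> {})"
        using A unfolding lsc_setvalued_at_def by (rule conjE) (rule conjunct2)
      from L[rule_format, OF Vb] obtain e where e: "e > 0" "\<And>u. u \<in> ball 0 e \<Longrightarrow> Sol f X u \<inter> ball xb r \<noteq> {}"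
        by blast
      define n where "n = norm (y - xb)"
      have n: "n > 0" using y0 by (simp add: n_def)
      define s where "s = e / (2 * n)"
      have s: "s > 0" using e n by (simp add: s_def)
      define u where "u = s *\<^sub>R (y - xb)"
      have "norm u = e / 2" using n s e(1) by (simp add: u_def s_def n_def)
      then have "u \<in> ball 0 e" using e by simp
      then obtain z where z: "z \<in> Sol f X u" "z \<in> ball xb r" using e(2) by blast
      have zX: "z \<in> X" and "h u z \<le> h u y" using z yX by (auto simp: Sol_eq)
      moreover have "g y \<le> g z" using ymin zX .
      ultimately have "inner u y \<le> inner u z" by (simp add: h_def)
      then have le: "s * inner (y - xb) (y - z) \<le> 0" by (simp add: u_def inner_diff_right right_diff_distrib)
      have "- (norm (y - xb) * norm (xb - z)) \<le> inner (y - xb) (xb - z)"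
        unfolding norm_minus_commute[of xb z] using norm_cauchy_schwarz[of "y - xb" "z - xb"] inner_diff_right[of "y - xb" xb z] inner_diff_right[of "y - xb" z xb] by linarith
      moreover have "inner (y - xb) (y - z) = inner (y - xb) (y - xb) + inner (y - xb) (xb - z)"
        by (simp add: inner_diff_right inner_diff_left)
      moreover have "inner (y - xb) (y - xb) = n * n" by (simp add: n_def power2_norm_eq_inner[symmetric] power2_eq_square)
      moreover have "norm (xb - z) < n" using z(2) r by (simp add: r_def dist_norm n_def norm_minus_commute) (smt (verit) norm_ge_zero)
      ultimately have "inner (y - xb) (y - z) > 0"
        using mult_strict_left_mono[OF \<open>norm (xb - z) < n\<close> n] unfolding n_def by linarith
      then have "s * inner (y - xb) (y - z) > 0" using s by simp
      then show False using le by simp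
    qed
    then show "(\<exists>x. Sol f X 0 = {x}) \<and> asymptotic_cone X \<inter> Kq f = {0}" using KQ by blast
  next
    assume "(\<exists>x. Sol f X 0 = {x}) \<and> asymptotic_cone X \<inter> Kq f = {0}"
    then obtain xb where xb: "Sol f X 0 = {xb}" by blast
    have xbX: "xb \<in> X" using xb by (auto simp: Sol_eq)
    have main: "\<exists>e>0. \<forall>u\<in>ball 0 e. Sol f X u \<noteq> {} \<and> Sol f X u \<subseteq> ball xb r"
      if r: "r > 0" for r
    proof -
      obtain e where e: "e > 0" "\<And>u y. norm u < e \<Longrightarrow> y \<in> X \<Longrightarrow> dist y xb \<ge> r \<Longrightarrow> h u xb < h u y"
        using claimA[OF xb r] by blast
      show ?thesis
      proof (intro exI[of _ e] conjI ballI e(1))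
        fix u :: 'a assume "u \<in> ball 0 e"
        then have u: "norm u < e" by simp
        show sub: "Sol f X u \<subseteq> ball xb r"
        proof
          fix x assume x: "x \<in> Sol f X u"
          then have "x \<in> X" "h u x \<le> h u xb" using xbX by (auto simp: Sol_eq)
          then show "x \<in> ball xb r" using e(2)[OF u, of x] by (force simp: dist_commute)
        qed
        have K: "compact (X \<inter> cball xb r)" using assms(3) by (simp add: closed_Int_compact)
        obtain z where z: "z \<in> X \<inter> cball xb r" "\<And>y. y \<in> X \<inter> cball xb r \<Longrightarrow> h u z \<le> h u y"
          using attains_min[OF assms(2) assms(3) K _ _ fin, of u] xbX r unfolding h_def by force
        have "z \<in> Sol f X u"
        proof -
          have "h u z \<le> h u y" if y: "y \<in> X" for y
          proof (cases "y \<in> cball xb r")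
            case True then show ?thesis using z(2) y by blast
          next
            case False
            then have "h u xb < h u y" using e(2)[OF u y] by (simp add: dist_commute)
            moreover have "h u z \<le> h u xb" using z(2) xbX r by simp
            ultimately show ?thesis by simp
          qed
          then show ?thesis using z(1) by (simp add: Sol_eq)
        qed
        then show "Sol f X u \<noteq> {}" by blast
      qed
    qed
    have usc: "usc_setvalued_at (Sol f X) 0"
      unfolding usc_setvalued_at_def
    proof safe
      fix V :: "'a set" assume V: "open V" "Sol f X 0 \<subseteq> V"
      have "xb \<in> V" using V xb by auto
      then obtain r where r: "r > 0" "ball xb r \<subseteq> V" using V(1) open_contains_ball by blast
      then show "\<exists>e>0. \<forall>u\<in>ball 0 e. Sol f X u \<subseteq> V" using main[OF r(1)] by blast
    qed
    have lsc: "lsc_setvalued_at (Sol f X) 0"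
      unfolding lsc_setvalued_at_def
    proof (intro conjI allI impI)
      show "Sol f X 0 \<noteq> {}" using xb by simp
    next
      fix V :: "'a set" assume "open V \<and> V \<inter> Sol f X 0 \<noteq> {}"
      then have V: "open V" "V \<inter> Sol f X 0 \<noteq> {}" by auto
      have "xb \<in> V" using V xb by auto
      then obtain r where r: "r > 0" "ball xb r \<subseteq> V" using V(1) open_contains_ball by blast
      then show "\<exists>e>0. \<forall>u\<in>ball 0 e. Sol f X u \<inter> V \<noteq> {}" using main[OF r(1)] by blast
    qed
    show "usc_setvalued_at (Sol f X) 0 \<and> lsc_setvalued_at (Sol f X) 0" using usc lsc by blast
  qed
qed

end
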